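(* Define rational functions of $t$ by $K_{r+1}=1-ty_{2r+1}$ and, for $k=r,r-1,\dots,2$, $K_k=1-ty_{2k-1}-\dfrac{ty_{2k}}{K_{k+1}}$. Then, as formal power series in $t$, $$\sum_{n\ge0}R_{1,n}t^n=\cfrac{R_{1,0}}{1-\cfrac{ty_1}{1-\cfrac{ty_2}{K_2}}},$$ where $y_{2\alpha-1}=\frac{R_{\alpha-1,0}R_{\alpha,1}}{R_{\alpha,0}R_{\alpha-1,1}}$ ($1\le\alpha\le r+1$) and $y_{2\alpha}=\frac{R_{\alpha-1,0}R_{\alpha+1,1}}{R_{\alpha,0}R_{\alpha,1}}$ ($1\le\alpha\le r$). (For $r=1$, $K_2=1-ty_3$.)
   Context: Fix $r\ge1$, $I_r=\{1,\dots,r\}$. Let $R_{1,0},\dots,R_{r,0},R_{1,1},\dots,R_{r,1}$ be algebraically independent indeterminates over $\mathbb Q$ and $(R_{\alpha,n})_{0\le\alpha\le r+1,n\in\mathbb Z}$ the $A_r$ $Q$-system: the unique family of nonzero elements of $\mathbb Q(R_{1,0},\dots,R_{r,1})$ with these initial values, $R_{0,n}=R_{r+1,n}=1$, and $R_{\alpha,n+1}R_{\alpha,n-1}=R_{\alpha,n}^2+R_{\alpha+1,n}R_{\alpha-1,n}$ ($\alpha\in I_r$, $n\in\mathbb Z$). *)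

theory Defs
  imports "HOL-Computational_Algebra.Formal_Power_Series"
begin

definition alg_indep_rat :: "nat \<Rightarrow> (nat \<Rightarrow> 'a::field_char_0) \<Rightarrow> bool" where
  "alg_indep_rat m x \<longleftrightarrow>
     (\<forall>(c :: (nat \<Rightarrow> nat) \<Rightarrow> rat) E.
        finite E \<and> E \<subseteq> {e. \<forall>i\<ge>m. e i = 0} \<and>
        (\<Sum>e\<in>E. of_rat (c e) * (\<Prod>i<m. x i ^ e i)) = 0
        \<longrightarrow> (\<forall>e\<in>E. c e = 0))"

end

theory Submission
  imports Defs
begin


lemma fdivE:
  fixes b :: "'a::field fps"
  assumes "fps_nth (b) 0 \<noteq> 0"
  shows "c / b = a \<longleftrightarrow> c = a * b"
proof
  assume "c / b = a"
  then have "c * inverse b = a" using assms by (simp add: fps_divide_unit)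
  then have "c * inverse b * b = a * b" by simp
  then show "c = a * b" using assms by (simp add: mult.assoc inverse_mult_eq_1)
next
  assume "c = a * b"
  then show "c / b = a" using assms by (simp add: fps_divide_unit mult.assoc inverse_mult_eq_1')
qed

lemma step_alg:
  fixes Ep0 Ep1 Ep2 E0 E1 E2 E3 a0 a1 b1 a2 b2 y1 y2 y3 y4 z1 z2 X :: "'b::comm_ring_1"
  assumes "Ep0 = (1 - X*z1)*Ep1 - X*z2*Ep2" "Ep1 = a1*E1 + b1*E2" "Ep2 = a2*E2 + b2*E3"
    "z1*a1 = a0*y1" "z1*b1 = a0*y2" "z2*a2 = b1*y3" "z2*b2 = b1*y4" "a1+b1=1"
    "E0 = (1 - X*y1)*E1 - X*y2*E2" "b1*E1 = b1*((1 - X*y3)*E2 - X*y4*E3)"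
  shows "Ep0 = E1 + a0*(E0 - E1)"
proof -
  have "Ep0 = a1*E1 + b1*E2 - X*(z1*a1)*E1 - X*(z1*b1)*E2 - X*(z2*a2)*E2 - X*(z2*b2)*E3"
    by (simp add: assms(1-3) algebra_simps)
  also have "... = a1*E1 + b1*E2 - X*(a0*y1)*E1 - X*(a0*y2)*E2 - X*(b1*y3)*E2 - X*(b1*y4)*E3"
    using assms(4-7) by simp
  also have "... = (a1+b1)*E1 - b1*E1 + b1*((1 - X*y3)*E2 - X*y4*E3) - a0*(X*y1*E1 + X*y2*E2)"
    by (simp add: algebra_simps)
  also have "... = E1 - a0*(X*y1*E1+X*y2*E2)" using assms(8,10) by simp
  also have "... = E1 + a0*(E0 - E1)" by (subst assms(9)) (simp add: algebra_simps)
  finally show ?thesis .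
qed

lemma step_alg2:
  fixes Ep1 Ep2 E1 E2 E3 a1 b1 a2 b2 y3 y4 z2 X :: "'b::comm_ring_1"
  assumes "Ep1 = a1*E1 + b1*E2" "Ep2 = a2*E2 + b2*E3"
    "z2*a2 = b1*y3" "z2*b2 = b1*y4" "a1+b1=1"
    "b1*E1 = b1*((1 - X*y3)*E2 - X*y4*E3)"
  shows "Ep1 - X*z2*Ep2 = E1"
proof -
  have "Ep1 - X*z2*Ep2 = a1*E1 + b1*E2 - X*(z2*a2)*E2 - X*(z2*b2)*E3"
    by (simp add: assms(1-2) algebra_simps)
  also have "... = a1*E1 + b1*E2 - X*(b1*y3)*E2 - X*(b1*y4)*E3"
    using assms(3-4) by simp
  also have "... = (a1+b1)*E1 - b1*E1 + b1*((1 - X*y3)*E2 - X*y4*E3)"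
    by (simp add: algebra_simps)
  also have "... = E1" using assms(5,6) by simp
  finally show ?thesis .
qed

function Ek :: "nat \<Rightarrow> (nat \<Rightarrow> 'a::field) \<Rightarrow> nat \<Rightarrow> 'a fps" where
  "Ek r y k = (if r + 2 \<le> k then 0 else if k = r + 1 then 1 else
      (1 - fps_X * fps_const (y (2*k+1))) * Ek r y (k+1) - fps_X * fps_const (y (2*k+2)) * Ek r y (k+2))"
  by auto
termination by (relation "measure (\<lambda>(r,y,k). r + 2 - k)") auto

declare Ek.simps[simp del]

lemma Ek_ge: "r + 2 \<le> k \<Longrightarrow> Ek r y k = 0" by (subst Ek.simps) simp
lemma Ek_top: "Ek r y (r+1) = 1" by (subst Ek.simps) simp
lemma Ek_top': "Ek r y (Suc r) = 1" using Ek_top by simp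
lemma Ek_rec: "k \<le> r \<Longrightarrow> Ek r y k = (1 - fps_X * fps_const (y (2*k+1))) * Ek r y (k+1) - fps_X * fps_const (y (2*k+2)) * Ek r y (k+2)"
  by (subst Ek.simps) simp

lemma Ek_0: "k \<le> r + 1 \<Longrightarrow> fps_nth (Ek r y k) 0 = 1"
proof (induction "r + 1 - k" arbitrary: k)
  case 0 then have "k = r + 1" by simp
  then show ?case by (simp add: Ek_top')
next
  case (Suc m)
  then have "k \<le> r" by simp
  have "fps_nth (Ek r y (k+1)) 0 = 1" using Suc by simp
  then show ?case using Ek_rec[OF \<open>k \<le> r\<close>, of y] by simp
qed

lemma Ek_cong: assumes "\<forall>j\<in>{1..2*r+1}. y j = y' j" shows "Ek r y k = Ek r y' k"
proof (induction "r + 2 - k" arbitrary: k rule: less_induct)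
  case less
  show ?case
  proof (cases "k \<le> r")
    case True
    have a: "y (2*k+1) = y' (2*k+1)" using assms True by auto
    show ?thesis
    proof (cases "k = r")
      case True
      then show ?thesis using Ek_rec[of k r y] Ek_rec[of k r y'] a by (simp add: Ek_ge Ek_top')
    next
      case False
      then have "y (2*k+2) = y' (2*k+2)" using assms \<open>k \<le> r\<close> by auto
      then show ?thesis using Ek_rec[OF \<open>k \<le> r\<close>, of y] Ek_rec[OF \<open>k \<le> r\<close>, of y'] a less[of "k+1"] less[of "k+2"] True by simp
    qed
  next
    case False
    then show ?thesis by (cases "k = r + 1") (auto simp: Ek_ge Ek_top')
  qed
qed



definition yy :: "nat \<Rightarrow> (nat \<Rightarrow> int \<Rightarrow> 'a::field) \<Rightarrow> int \<Rightarrow> nat \<Rightarrow> 'a" where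
 "yy r R n j = (if j = 0 \<or> 2*r+1 < j then 0 else if odd j then
     R ((j+1) div 2 - 1) n * R ((j+1) div 2) (n+1) / (R ((j+1) div 2) n * R ((j+1) div 2 - 1) (n+1))
   else R (j div 2 - 1) n * R (j div 2 + 1) (n+1) / (R (j div 2) n * R (j div 2) (n+1)))"

definition aa :: "nat \<Rightarrow> (nat \<Rightarrow> int \<Rightarrow> 'a::field) \<Rightarrow> int \<Rightarrow> nat \<Rightarrow> 'a" where
 "aa r R n k = (if k \<le> r then (R k (n+1))^2 / (R k n * R k (n+2)) else 1)"
definition bb :: "nat \<Rightarrow> (nat \<Rightarrow> int \<Rightarrow> 'a::field) \<Rightarrow> int \<Rightarrow> nat \<Rightarrow> 'a" where
 "bb r R n k = (if k \<le> r then R (k+1) (n+1) * R (k-1) (n+1) / (R k n * R k (n+2)) else 0)"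

lemma yy_odd: "k \<le> r \<Longrightarrow> yy r R n (2*k+1) = R k n * R (k+1) (n+1) / (R (k+1) n * R k (n+1))"
  unfolding yy_def by simp
lemma yy_odd0: "r < k \<Longrightarrow> yy r R n (2*k+1) = 0"
  unfolding yy_def by simp
lemma yy_even: "k + 1 \<le> r \<Longrightarrow> yy r R n (2*k+2) = R k n * R (k+2) (n+1) / (R (k+1) n * R (k+1) (n+1))"
  unfolding yy_def by simp
lemma yy_even0: "r \<le> k \<Longrightarrow> yy r R n (2*k+2) = 0"
  unfolding yy_def by simp

locale qs =
  fixes r :: nat and R :: "nat \<Rightarrow> int \<Rightarrow> 'a::field"
  assumes nz: "\<forall>\<alpha>\<le>r + 1. \<forall>n. R \<alpha> n \<noteq> 0"
    and b0: "\<forall>n. R 0 n = 1"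
    and br: "\<forall>n. R (r + 1) n = 1"
    and q: "\<forall>\<alpha>\<in>{1..r}. \<forall>n. R \<alpha> (n + 1) * R \<alpha> (n - 1) = (R \<alpha> n)\<^sup>2 + R (\<alpha> + 1) n * R (\<alpha> - 1) n"
begin

lemma nzR: "\<alpha> \<le> r + 1 \<Longrightarrow> R \<alpha> m \<noteq> 0" using nz by auto

lemma n2: "(n::int) + 1 + 1 = n + 2" by simp

lemma yO: "k \<le> r \<Longrightarrow> yy r R n (2*k+1) = R k n * R (k+1) (n+1) / (R (k+1) n * R k (n+1))"
  by (rule yy_odd)
lemma yO': "k \<le> r \<Longrightarrow> yy r R (n+1) (2*k+1) = R k (n+1) * R (k+1) (n+2) / (R (k+1) (n+1) * R k (n+2))"
  using yy_odd[of k r R "n+1"] by (simp add: n2)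
lemma yE: "k + 1 \<le> r \<Longrightarrow> yy r R n (2*k+2) = R k n * R (k+2) (n+1) / (R (k+1) n * R (k+1) (n+1))"
  by (rule yy_even)
lemma yE': "k + 1 \<le> r \<Longrightarrow> yy r R (n+1) (2*k+2) = R k (n+1) * R (k+2) (n+2) / (R (k+1) (n+1) * R (k+1) (n+2))"
  using yy_even[of k r R "n+1"] by (simp add: n2)
lemma aI: "k \<le> r \<Longrightarrow> aa r R n k = (R k (n+1))^2 / (R k n * R k (n+2))" by (simp add: aa_def)
lemma bI: "k \<le> r \<Longrightarrow> bb r R n k = R (k+1) (n+1) * R (k-1) (n+1) / (R k n * R k (n+2))" by (simp add: bb_def)

lemma L_ab: assumes "1 \<le> k" shows "aa r R n k + bb r R n k = 1"
proof (cases "k \<le> r")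
  case True
  have e: "(R k (n+1))\<^sup>2 + R (k+1) (n+1) * R (k-1) (n+1) = R k n * R k (n+2)"
    using q True assms by (auto dest!: bspec[of _ _ k] spec[of _ "n+1"] simp: n2 algebra_simps)
  have "R k n \<noteq> 0" "R k (n+2) \<noteq> 0" using nzR True by auto
  moreover have "aa r R n k + bb r R n k = ((R k (n+1))\<^sup>2 + R (k+1) (n+1) * R (k-1) (n+1)) / (R k n * R k (n+2))"
    unfolding aI[OF True] bI[OF True] by (simp add: add_divide_distrib)
  ultimately show ?thesis unfolding e by simp
qed (simp add: aa_def bb_def)

lemma L_i1: assumes "k \<le> r"
  shows "yy r R (n+1) (2*k+1) * aa r R n (k+1) = aa r R n k * yy r R n (2*k+1)"
proof -
  have nzs: "R k n \<noteq> 0" "R k (n+1) \<noteq> 0" "R k (n+2) \<noteq> 0" "R (k+1) n \<noteq> 0" "R (k+1) (n+1) \<noteq> 0" "R (k+1) (n+2) \<noteq> 0"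
    using nzR assms by auto
  show ?thesis
  proof (cases "k + 1 \<le> r")
    case True
    show ?thesis unfolding yO[OF assms] yO'[OF assms] aI[OF assms] aI[OF True]
      using nzs by (simp add: field_simps power2_eq_square)
  next
    case False
    then have "k + 1 = r + 1" using assms by simp
    then have o: "R (k+1) n = 1" "R (k+1) (n+1) = 1" "R (k+1) (n+2) = 1" "aa r R n (k+1) = 1" using br by (auto simp: aa_def)
    show ?thesis unfolding yO[OF assms] yO'[OF assms] aI[OF assms] o
      using nzs o by (simp add: field_simps power2_eq_square)
  qed
qed

lemma L_i2: assumes "k \<le> r"
  shows "yy r R (n+1) (2*k+1) * bb r R n (k+1) = aa r R n k * yy r R n (2*k+2)"
proof (cases "k + 1 \<le> r")
  case True
  have nzs: "R k n \<noteq> 0" "R k (n+1) \<noteq> 0" "R k (n+2) \<noteq> 0" "R (k+1) n \<noteq> 0" "R (k+1) (n+1) \<noteq> 0" "R (k+1) (n+2) \<noteq> 0"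
    "R (k+2) (n+1) \<noteq> 0"
    using nzR True by auto
  have b: "bb r R n (k+1) = R (k+2) (n+1) * R k (n+1) / (R (k+1) n * R (k+1) (n+2))"
    using bI[OF True] by (simp add: numeral_2_eq_2)
  show ?thesis unfolding yO[OF assms] yO'[OF assms] aI[OF assms] yE[OF True] b
    using nzs by (simp add: field_simps power2_eq_square)
next
  case False
  have "yy r R n (2*k+2) = 0" using False by (intro yy_even0) simp
  then show ?thesis using assms False by (simp add: bb_def)
qed

lemma L_ii1:
  shows "yy r R (n+1) (2*k+2) * aa r R n (k+2) = bb r R n (k+1) * yy r R n (2*k+3)"
proof (cases "k + 1 \<le> r")
  case True
  have nzs: "R k (n+1) \<noteq> 0" "R (k+1) n \<noteq> 0" "R (k+1) (n+1) \<noteq> 0" "R (k+1) (n+2) \<noteq> 0"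
    "R (k+2) n \<noteq> 0" "R (k+2) (n+1) \<noteq> 0" "R (k+2) (n+2) \<noteq> 0"
    using nzR True by auto
  have y3: "yy r R n (2*k+3) = R (k+1) n * R (k+2) (n+1) / (R (k+2) n * R (k+1) (n+1))"
    using yy_odd[of "k+1" r R n] True by (simp add: numeral_3_eq_3 numeral_2_eq_2)
  have b: "bb r R n (k+1) = R (k+2) (n+1) * R k (n+1) / (R (k+1) n * R (k+1) (n+2))"
    using bI[OF True] by (simp add: numeral_2_eq_2)
  show ?thesis
  proof (cases "k + 2 \<le> r")
    case True
    show ?thesis unfolding yE'[OF \<open>k+1 \<le> r\<close>] aI[OF True] b y3
      using nzs by (simp add: field_simps power2_eq_square)
  next
    case False
    then have "k + 2 = r + 1" using \<open>k+1 \<le> r\<close> by simp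
    then have o: "R (k+2) n = 1" "R (k+2) (n+1) = 1" "R (k+2) (n+2) = 1" "aa r R n (k+2) = 1" using br by (auto simp: aa_def)
    show ?thesis unfolding yE'[OF \<open>k+1 \<le> r\<close>] b y3 o
      using nzs o by (simp add: field_simps power2_eq_square)
  qed
next
  case False
  have "yy r R (n+1) (2*k+2) = 0" using False by (intro yy_even0) simp
  then show ?thesis using False by (simp add: bb_def)
qed

lemma L_ii2:
  shows "yy r R (n+1) (2*k+2) * bb r R n (k+2) = bb r R n (k+1) * yy r R n (2*k+4)"
proof (cases "k + 2 \<le> r")
  case True
  then have T1: "k + 1 \<le> r" by simp
  have nzs: "R k (n+1) \<noteq> 0" "R (k+1) n \<noteq> 0" "R (k+1) (n+1) \<noteq> 0" "R (k+1) (n+2) \<noteq> 0"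
    "R (k+2) n \<noteq> 0" "R (k+2) (n+1) \<noteq> 0" "R (k+2) (n+2) \<noteq> 0" "R (k+3) (n+1) \<noteq> 0"
    using nzR True by auto
  have e1: "2*(k+1)+2 = 2*k+4" "k+1+2 = k+3" "k+1+1 = k+2" "k+1-1 = k" "k+2+1 = k+3" "k+2-1 = k+1" by simp_all
  have y4: "yy r R n (2*k+4) = R (k+1) n * R (k+3) (n+1) / (R (k+2) n * R (k+2) (n+1))"
    using yy_even[of "k+1" r R n] True unfolding e1 by blast
  have b1: "bb r R n (k+1) = R (k+2) (n+1) * R k (n+1) / (R (k+1) n * R (k+1) (n+2))"
    using bI[OF T1] unfolding e1 by blast
  have b2: "bb r R n (k+2) = R (k+3) (n+1) * R (k+1) (n+1) / (R (k+2) n * R (k+2) (n+2))"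
    using bI[OF True] unfolding e1 by blast
  show ?thesis unfolding yE'[OF T1] b1 b2 y4
    using nzs by (simp add: field_simps power2_eq_square)
next
  case False
  have e: "2*(k+1)+2 = 2*k+4" by simp
  have "yy r R n (2*k+4) = 0" using yy_even0[of r "k+1" R n] False unfolding e by simp
  then show ?thesis using False by (simp add: bb_def)
qed

end


context qs begin

abbreviation "EE n k \<equiv> Ek r (yy r R n) k"

lemma stepk:
  assumes k: "k \<le> r"
    and I1: "EE (n+1) (k+1) = fps_const (aa r R n (k+1)) * EE n (k+1) + fps_const (bb r R n (k+1)) * EE n (k+2)"
    and I2: "EE (n+1) (k+2) = fps_const (aa r R n (k+2)) * EE n (k+2) + fps_const (bb r R n (k+2)) * EE n (k+3)"
  shows "EE (n+1) k = EE n (k+1) + fps_const (aa r R n k) * (EE n k - EE n (k+1))"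
    and "EE (n+1) (k+1) - fps_X * fps_const (yy r R (n+1) (2*k+2)) * EE (n+1) (k+2) = EE n (k+1)"
proof -
  have s1: "fps_const (yy r R (n+1) (2*k+1)) * fps_const (aa r R n (k+1)) = fps_const (aa r R n k) * fps_const (yy r R n (2*k+1))"
    using L_i1[OF k, of n] by simp
  have s2: "fps_const (yy r R (n+1) (2*k+1)) * fps_const (bb r R n (k+1)) = fps_const (aa r R n k) * fps_const (yy r R n (2*k+2))"
    using L_i2[OF k, of n] by simp
  have s3: "fps_const (yy r R (n+1) (2*k+2)) * fps_const (aa r R n (k+2)) = fps_const (bb r R n (k+1)) * fps_const (yy r R n (2*k+3))"
    using L_ii1[of n k] by simp
  have s4: "fps_const (yy r R (n+1) (2*k+2)) * fps_const (bb r R n (k+2)) = fps_const (bb r R n (k+1)) * fps_const (yy r R n (2*k+4))"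
    using L_ii2[of n k] by simp
  have s5: "fps_const (aa r R n (k+1)) + fps_const (bb r R n (k+1)) = 1"
    using L_ab[of "k+1" n] by simp
  have e3: "2*(k+1)+1 = 2*k+3" "2*(k+1)+2 = 2*k+4" "k+1+1 = k+2" "k+1+2 = k+3" by simp_all
  have hb: "fps_const (bb r R n (k+1)) * EE n (k+1) = fps_const (bb r R n (k+1)) *
      ((1 - fps_X * fps_const (yy r R n (2*k+3))) * EE n (k+2) - fps_X * fps_const (yy r R n (2*k+4)) * EE n (k+3))"
  proof (cases "k + 1 \<le> r")
    case True
    show ?thesis using Ek_rec[OF True, of "yy r R n"] unfolding e3 by simp
  next
    case False
    then show ?thesis by (simp add: bb_def)
  qed
  have rk: "EE n k = (1 - fps_X * fps_const (yy r R n (2*k+1))) * EE n (k+1) - fps_X * fps_const (yy r R n (2*k+2)) * EE n (k+2)"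
    by (rule Ek_rec[OF k])
  have rk': "EE (n+1) k = (1 - fps_X * fps_const (yy r R (n+1) (2*k+1))) * EE (n+1) (k+1) - fps_X * fps_const (yy r R (n+1) (2*k+2)) * EE (n+1) (k+2)"
    by (rule Ek_rec[OF k])
  show "EE (n+1) k = EE n (k+1) + fps_const (aa r R n k) * (EE n k - EE n (k+1))"
    by (rule step_alg[OF rk' I1 I2 s1 s2 s3 s4 s5 rk hb])
  show "EE (n+1) (k+1) - fps_X * fps_const (yy r R (n+1) (2*k+2)) * EE (n+1) (k+2) = EE n (k+1)"
    by (rule step_alg2[OF I1 I2 s3 s4 s5 hb])
qed

lemma inv: "1 \<le> k \<Longrightarrow> EE (n+1) k = fps_const (aa r R n k) * EE n k + fps_const (bb r R n k) * EE n (k+1)"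
proof (induction "r+2-k" arbitrary: k rule: less_induct)
  case less
  consider "r+2 \<le> k" | "k = r+1" | "k \<le> r" by arith
  then show ?case
  proof cases
    case 1 then show ?thesis by (simp add: Ek_ge aa_def bb_def)
  next
    case 2 then show ?thesis by (simp add: Ek_ge Ek_top' aa_def bb_def)
  next
    case 3
    have I1: "EE (n+1) (k+1) = fps_const (aa r R n (k+1)) * EE n (k+1) + fps_const (bb r R n (k+1)) * EE n (k+2)"
      using less(1)[of "k+1"] 3 by (simp add: numeral_2_eq_2 numeral_3_eq_3)
    have I2: "EE (n+1) (k+2) = fps_const (aa r R n (k+2)) * EE n (k+2) + fps_const (bb r R n (k+2)) * EE n (k+3)"
      using less(1)[of "k+2"] 3 by (simp add: numeral_2_eq_2 numeral_3_eq_3)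
    have "bb r R n k = 1 - aa r R n k"
      using L_ab[OF less(2), of n] by (metis add_diff_cancel_left')
    then have ab: "fps_const (bb r R n k) = 1 - fps_const (aa r R n k)" by (metis fps_const_1_eq_1 fps_const_sub)
    show ?thesis using stepk(1)[OF 3 I1 I2] unfolding ab by (simp add: algebra_simps)
  qed
qed

lemma inv0: "EE (n+1) 0 = EE n 0"
proof -
  have a0: "aa r R n 0 = 1" using b0 by (simp add: aa_def)
  show ?thesis using stepk(1)[of 0 n] inv[of 1 n] inv[of 2 n] a0 by (simp add: numeral_2_eq_2 numeral_3_eq_3)
qed

lemma inv1: "EE (n+1) 1 - fps_X * fps_const (yy r R (n+1) 2) * EE (n+1) 2 = EE n 1"
  using stepk(2)[of 0 n] inv[of 1 n] inv[of 2 n] by (simp add: numeral_2_eq_2 numeral_3_eq_3)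

end


lemma divmul: fixes b :: "'a::field fps" assumes "fps_nth b 0 \<noteq> 0" shows "(a / b) * b = a"
  using fdivE[OF assms, of a "a/b"] by simp

lemma div_div: fixes b d :: "'a::field fps" assumes "fps_nth b 0 \<noteq> 0" "fps_nth d 0 \<noteq> 0"
  shows "a / (b / d) = a * d / b"
proof -
  have bd: "fps_nth (b/d) 0 \<noteq> 0" using assms by simp
  have "a * d / b * (b / d) = a"
  proof -
    have "a * d / b * (b / d) = (a * d / b * b) / d"
      using assms by (simp add: fps_divide_unit mult.assoc)
    also have "... = a * d / d" using divmul[OF assms(1)] by simp
    also have "... = a" using fdivE[OF assms(2), of "a*d" a] by simp
    finally show ?thesis .
  qed
  then show ?thesis using fdivE[OF bd, of a "a*d/b"] by simp
qed

context qs begin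

definition Onum :: "int \<Rightarrow> 'a fps" where "Onum n = EE n 1 - fps_X * fps_const (yy r R n 2) * EE n 2"
definition Gfun :: "int \<Rightarrow> 'a fps" where "Gfun n = fps_const (R 1 n) * Onum n / EE n 0"

lemma E00: "fps_nth (EE n 0) 0 = 1" by (rule Ek_0) simp

lemma GG_rec: assumes r1: "1 \<le> r" shows "Gfun n = fps_const (R 1 n) + fps_X * Gfun (n+1)"
proof -
  have nz0: "fps_nth (EE n 0) 0 \<noteq> 0" using E00 by simp
  have rec0: "EE n 0 = Onum n - fps_X * fps_const (yy r R n 1) * EE n 1"
    using Ek_rec[of 0 r "yy r R n"] unfolding Onum_def by (simp add: algebra_simps numeral_2_eq_2)
  have y1: "yy r R n 1 = R 1 (n+1) / R 1 n" using yO[of 0 n] b0 by simp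
  have R1: "R 1 n \<noteq> 0" using nzR[of 1] r1 by simp
  have cy: "fps_const (R 1 n) * fps_const (yy r R n 1) = fps_const (R 1 (n+1))"
    using R1 y1 by simp
  have g1: "Gfun (n+1) * EE n 0 = fps_const (R 1 (n+1)) * EE n 1"
  proof -
    have "Gfun (n+1) * EE (n+1) 0 = fps_const (R 1 (n+1)) * Onum (n+1)"
      unfolding Gfun_def by (rule divmul) (simp add: E00)
    moreover have "Onum (n+1) = EE n 1" unfolding Onum_def by (rule inv1)
    ultimately show ?thesis using inv0[of n] by simp
  qed
  have "fps_const (R 1 n) * Onum n = (fps_const (R 1 n) + fps_X * Gfun (n+1)) * EE n 0"
  proof -
    have "(fps_const (R 1 n) + fps_X * Gfun (n+1)) * EE n 0 = fps_const (R 1 n) * EE n 0 + fps_X * (Gfun (n+1) * EE n 0)"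
      by (simp add: algebra_simps)
    also have "... = fps_const (R 1 n) * (Onum n - fps_X * fps_const (yy r R n 1) * EE n 1) + fps_X * (fps_const (R 1 (n+1)) * EE n 1)"
      using g1 rec0 by simp
    also have "... = fps_const (R 1 n) * Onum n - fps_X * (fps_const (R 1 n) * fps_const (yy r R n 1)) * EE n 1 + fps_X * (fps_const (R 1 (n+1)) * EE n 1)"
      by (simp add: algebra_simps)
    also have "... = fps_const (R 1 n) * Onum n" unfolding cy by simp
    finally show ?thesis by simp
  qed
  then have "fps_const (R 1 n) * Onum n / EE n 0 = fps_const (R 1 n) + fps_X * Gfun (n+1)"
    using fdivE[OF nz0, of "fps_const (R 1 n) * Onum n" "fps_const (R 1 n) + fps_X * Gfun (n+1)"] by simp
  then show ?thesis unfolding Gfun_def[of n] by simp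
qed

lemma GG_eq: assumes r1: "1 \<le> r" shows "Abs_fps (\<lambda>m. R 1 (n + int m)) = Gfun n"
proof -
  have "\<forall>n. fps_nth (Gfun n) m = R 1 (n + int m)" for m
  proof (induction m)
    case 0 show ?case using GG_rec[OF r1] by (metis add.right_neutral fps_X_mult_nth fps_add_nth fps_nth_fps_const of_nat_0)
  next
    case (Suc m)
    show ?case
    proof
      fix n
      have "fps_nth (Gfun n) (Suc m) = fps_nth (Gfun (n+1)) m"
        using GG_rec[OF r1, of n] by simp
      also have "... = R 1 (n + int (Suc m))" using Suc by (simp add: algebra_simps)
      finally show "fps_nth (Gfun n) (Suc m) = R 1 (n + int (Suc m))" .
    qed
  qed
  then show ?thesis by (simp add: fps_eq_iff)
qed

end

lemma Kform:
  fixes y :: "nat \<Rightarrow> 'a::field" and K :: "nat \<Rightarrow> 'a fps"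
  assumes KL: "K (r + 1) = 1 - fps_X * fps_const (y (2 * r + 1))"
    and KR: "\<forall>k\<in>{2..r}. K k = 1 - fps_X * fps_const (y (2 * k - 1)) - fps_X * fps_const (y (2 * k)) / K (k + 1)"
  shows "2 \<le> k \<Longrightarrow> k \<le> r + 1 \<Longrightarrow> K k = Ek r y (k-1) / Ek r y k"
proof (induction "r + 1 - k" arbitrary: k)
  case 0
  then have k: "k = r + 1" by simp
  have "Ek r y r = 1 - fps_X * fps_const (y (2 * r + 1))"
    using Ek_rec[of r r y] by (simp add: Ek_ge Ek_top')
  then show ?case using k KL by (simp add: Ek_top')
next
  case (Suc m)
  then have k: "k \<le> r" "2 \<le> k" by auto
  have IH: "K (k+1) = Ek r y k / Ek r y (k+1)" using Suc by simp
  have n1: "fps_nth (Ek r y k) 0 \<noteq> 0" "fps_nth (Ek r y (k+1)) 0 \<noteq> 0" using k by (simp_all add: Ek_0)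
  have Kk: "K k = 1 - fps_X * fps_const (y (2 * k - 1)) - fps_X * fps_const (y (2 * k)) * Ek r y (k+1) / Ek r y k"
    using KR k IH div_div[OF n1] by simp
  have e: "2*(k-1)+1 = 2*k-1" "2*(k-1)+2 = 2*k" "k-1+1 = k" "k-1+2 = k+1" using k by auto
  have rec: "Ek r y (k-1) = (1 - fps_X * fps_const (y (2*k-1))) * Ek r y k - fps_X * fps_const (y (2*k)) * Ek r y (k+1)"
    using Ek_rec[of "k-1" r y] k unfolding e by simp
  have "Ek r y (k-1) = K k * Ek r y k"
    unfolding Kk rec using divmul[OF n1(1)] by (simp add: algebra_simps)
  then have "Ek r y (k-1) / Ek r y k = K k" using fdivE[OF n1(1), of "Ek r y (k-1)" "K k"] by simp
  then show ?case by simp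
qed

theorem mainTheorem9:
  fixes r :: nat
    and R :: "nat \<Rightarrow> int \<Rightarrow> 'a::field_char_0"
    and y :: "nat \<Rightarrow> 'a"
    and K :: "nat \<Rightarrow> 'a fps"
  assumes r_pos: "r \<ge> 1"
    and indep: "alg_indep_rat (2 * r) (\<lambda>i. if i < r then R (i + 1) 0 else R (i - r + 1) 1)"
    and nonzero: "\<forall>\<alpha>\<le>r + 1. \<forall>n. R \<alpha> n \<noteq> 0"
    and bd0: "\<forall>n. R 0 n = 1"
    and bdr: "\<forall>n. R (r + 1) n = 1"
    and qsys: "\<forall>\<alpha>\<in>{1..r}. \<forall>n. R \<alpha> (n + 1) * R \<alpha> (n - 1) = (R \<alpha> n)\<^sup>2 + R (\<alpha> + 1) n * R (\<alpha> - 1) n"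
    and y_odd: "\<forall>\<alpha>\<in>{1..r + 1}. y (2 * \<alpha> - 1) = (R (\<alpha> - 1) 0 * R \<alpha> 1) / (R \<alpha> 0 * R (\<alpha> - 1) 1)"
    and y_even: "\<forall>\<alpha>\<in>{1..r}. y (2 * \<alpha>) = (R (\<alpha> - 1) 0 * R (\<alpha> + 1) 1) / (R \<alpha> 0 * R \<alpha> 1)"
    and K_last: "K (r + 1) = 1 - fps_X * fps_const (y (2 * r + 1))"
    and K_rec: "\<forall>k\<in>{2..r}. K k = 1 - fps_X * fps_const (y (2 * k - 1))
                                   - fps_X * fps_const (y (2 * k)) / K (k + 1)"
  shows "Abs_fps (\<lambda>n. R 1 (int n)) =
           fps_const (R 1 0) /
             (1 - fps_X * fps_const (y 1) / (1 - fps_X * fps_const (y 2) / K 2))"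
proof -
  interpret qs r R using nonzero bd0 bdr qsys by unfold_locales
  have yeq: "\<forall>j\<in>{1..2*r+1}. y j = yy r R 0 j"
  proof
    fix j assume j: "j \<in> {1..2*r+1}"
    show "y j = yy r R 0 j"
    proof (cases "odd j")
      case True
      then obtain a where a: "j = 2*a+1" by (metis oddE)
      then have ar: "a \<le> r" using j by simp
      have "y (2*(a+1) - 1) = R a 0 * R (a+1) 1 / (R (a+1) 0 * R a 1)"
        using y_odd ar by (auto dest!: bspec[of _ _ "a+1"])
      moreover have "2*(a+1) - 1 = j" using a by simp
      moreover have "yy r R 0 j = R a 0 * R (a+1) 1 / (R (a+1) 0 * R a 1)"
        using yO[OF ar, of 0] a by simp
      ultimately show ?thesis by simp
    next
      case False
      then obtain b where b: "j = 2*b" by (metis evenE)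
      then have br1: "1 \<le> b" "b \<le> r" using j by auto
      have "y (2*b) = R (b-1) 0 * R (b+1) 1 / (R b 0 * R b 1)"
        using y_even br1 by (auto dest!: bspec[of _ _ b])
      moreover have e: "2*(b-1)+2 = j" "b-1+1 = b" "b-1+2 = b+1" using b br1 by auto
      moreover have "yy r R 0 j = R (b-1) 0 * R (b+1) 1 / (R b 0 * R b 1)"
        using yE[of "b-1" 0] br1 unfolding e by simp
      ultimately show ?thesis using b by simp
    qed
  qed
  have EK: "\<And>k. Ek r y k = Ek r (yy r R 0) k" by (rule Ek_cong[OF yeq])
  have y2: "y 2 = yy r R 0 2" using yeq r_pos by auto
  have K2: "K 2 = Ek r y 1 / Ek r y 2" using Kform[OF K_last K_rec, of 2] r_pos by simp
  have n0: "fps_nth (Ek r y 0) 0 \<noteq> 0" "fps_nth (Ek r y 1) 0 \<noteq> 0" "fps_nth (Ek r y 2) 0 \<noteq> 0"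
    using r_pos by (simp_all add: Ek_0)
  define Ov where "Ov = Ek r y 1 - fps_X * fps_const (y 2) * Ek r y 2"
  have nO: "fps_nth Ov 0 \<noteq> 0" using n0 unfolding Ov_def by (simp add: Ek_0)
  have st1: "1 - fps_X * fps_const (y 2) / K 2 = Ov / Ek r y 1"
  proof -
    have "1 - fps_X * fps_const (y 2) / K 2 = 1 - fps_X * fps_const (y 2) * Ek r y 2 / Ek r y 1"
      unfolding K2 using div_div[OF n0(2) n0(3)] by simp
    moreover have "Ov / Ek r y 1 = 1 - fps_X * fps_const (y 2) * Ek r y 2 / Ek r y 1"
    proof -
      have "Ov = (1 - fps_X * fps_const (y 2) * Ek r y 2 / Ek r y 1) * Ek r y 1"
        unfolding Ov_def using divmul[OF n0(2)] by (simp add: algebra_simps)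
      then show ?thesis using fdivE[OF n0(2)] by blast
    qed
    ultimately show ?thesis by simp
  qed
  have st2: "1 - fps_X * fps_const (y 1) / (Ov / Ek r y 1) = Ek r y 0 / Ov"
  proof -
    have "1 - fps_X * fps_const (y 1) / (Ov / Ek r y 1) = 1 - fps_X * fps_const (y 1) * Ek r y 1 / Ov"
      using div_div[OF nO n0(2)] by simp
    moreover have "Ek r y 0 / Ov = 1 - fps_X * fps_const (y 1) * Ek r y 1 / Ov"
    proof -
      have r0: "Ek r y 0 = (1 - fps_X * fps_const (y 1)) * Ek r y 1 - fps_X * fps_const (y 2) * Ek r y 2"
        using Ek_rec[of 0 r y] by (simp add: numeral_2_eq_2)
      have "Ek r y 0 = (1 - fps_X * fps_const (y 1) * Ek r y 1 / Ov) * Ov"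
        unfolding r0 using divmul[OF nO] unfolding Ov_def by (simp add: algebra_simps)
      then show ?thesis using fdivE[OF nO] by blast
    qed
    ultimately show ?thesis by simp
  qed
  have rhs: "fps_const (R 1 0) / (1 - fps_X * fps_const (y 1) / (1 - fps_X * fps_const (y 2) / K 2))
      = fps_const (R 1 0) * Ov / Ek r y 0"
    unfolding st1 st2 using div_div[OF n0(1) nO] by simp
  have "fps_const (R 1 0) * Ov / Ek r y 0 = Gfun 0"
    unfolding Gfun_def Onum_def Ov_def EK y2 by simp
  moreover have "Abs_fps (\<lambda>n. R 1 (int n)) = Gfun 0"
    using GG_eq[OF r_pos, of 0] by simp
  ultimately show ?thesis using rhs by simp
qed

end
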